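(* Let $S\subset\mathbf R^4$ be a surface and $p\in S$ a flat inflection point. Then for every unit normal vector $\nu\in N_pS$, the image of $S$ near $p$ under the orthogonal projection of $\mathbf R^4$ onto the hyperplane $\nu^\perp\cong\mathbf R^3$ (a surface in $\mathbf R^3$ near the image of $p$) has zero Gaussian curvature at the image of $p$, i.e. the image of $p$ lies on the parabolic curve of that projected surface.
   Context: Use an adapted orthonormal frame $e_1,e_2$ (tangent), $e_3,e_4$ (normal) at $p$; the second fundamental form is $\mathbf{II}(u)=(au_1^2+2bu_1u_2+cu_2^2)e_3+(eu_1^2+2fu_1u_2+gu_2^2)e_4$ for $u=u_1e_1+u_2e_2$. The curvature ellipse at $p$ is $\{\mathbf{II}(u):|u|=1\}\subset N_pS$ with $p$ as origin. $p$ is an inflection point if the curvature ellipse is a (possibly degenerate) segment contained in a line through the origin; it is a flat inflection point if moreover the origin is an endpoint of this segment. Equivalently, flat inflection points are the points where $\Delta=0$ and $K=0$, with $K=(ac-b^2)+(eg-f^2)$ and $\Delta=(ac-b^2)(eg-f^2)-\tfrac14(ag+ce-2bf)^2$. *)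

theory Defs
  imports "HOL-Analysis.Analysis"
begin

text \<open>A (local piece of a) surface in R^4 is given by a parametrization
  phi :: real * real => real^4, defined and C^2 on an open set of parameters.\<close>

definition pd :: "(real \<times> real \<Rightarrow> real^4) \<Rightarrow> real \<times> real \<Rightarrow> real \<times> real \<Rightarrow> real^4" where
  "pd f d x = frechet_derivative f (at x) d"

abbreviation du :: "real \<times> real" where "du \<equiv> (1, 0)"
abbreviation dv :: "real \<times> real" where "dv \<equiv> (0, 1)"

definition regular_C2_param :: "(real \<times> real \<Rightarrow> real^4) \<Rightarrow> (real \<times> real) set \<Rightarrow> bool" where
  "regular_C2_param phi U \<longleftrightarrow> open U \<and>
     (\<forall>x\<in>U. phi differentiable (at x)) \<and>
     (\<forall>d1\<in>{du, dv}. \<forall>x\<in>U. pd phi d1 differentiable (at x)) \<and>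
     (\<forall>d1\<in>{du, dv}. \<forall>d2\<in>{du, dv}. continuous_on U (pd (pd phi d1) d2)) \<and>
     (\<forall>x\<in>U. \<forall>s t. s *\<^sub>R pd phi du x + t *\<^sub>R pd phi dv x = 0 \<longrightarrow> s = 0 \<and> t = 0)"

definition tangent_space :: "(real \<times> real \<Rightarrow> real^4) \<Rightarrow> real \<times> real \<Rightarrow> (real^4) set" where
  "tangent_space phi x = span {pd phi du x, pd phi dv x}"

definition hess_term :: "(real \<times> real \<Rightarrow> real^4) \<Rightarrow> real \<times> real \<Rightarrow> real \<Rightarrow> real \<Rightarrow> real^4" where
  "hess_term phi x w1 w2 = (w1^2) *\<^sub>R pd (pd phi du) du x + (2 * w1 * w2) *\<^sub>R pd (pd phi du) dv x
      + (w2^2) *\<^sub>R pd (pd phi dv) dv x"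

text \<open>Curvature ellipse at p = phi x: the set of II(u) for unit tangent vectors u,
  where II(u) is the normal component of the second derivative along u
  (with p as origin of the normal plane N_pS).\<close>
definition curvature_ellipse :: "(real \<times> real \<Rightarrow> real^4) \<Rightarrow> real \<times> real \<Rightarrow> (real^4) set" where
  "curvature_ellipse phi x = {y. \<exists>w1 w2 t.
      norm (w1 *\<^sub>R pd phi du x + w2 *\<^sub>R pd phi dv x) = 1 \<and>
      t \<in> tangent_space phi x \<and> y = hess_term phi x w1 w2 - t \<and>
      (\<forall>z\<in>tangent_space phi x. y \<bullet> z = 0)}"

text \<open>Flat inflection point: the curvature ellipse is a (possibly degenerate) segment on a
  line through the origin having the origin as an endpoint, i.e. it contains the origin and
  lies in a closed ray from the origin.\<close>
definition flat_inflection :: "(real \<times> real \<Rightarrow> real^4) \<Rightarrow> real \<times> real \<Rightarrow> bool" where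
  "flat_inflection phi x \<longleftrightarrow> 0 \<in> curvature_ellipse phi x \<and>
      (\<exists>v. curvature_ellipse phi x \<subseteq> {s *\<^sub>R v | s. s \<ge> 0})"

definition proj_hyp :: "real^4 \<Rightarrow> real^4 \<Rightarrow> real^4" where
  "proj_hyp nu y = y - (y \<bullet> nu) *\<^sub>R nu"

text \<open>Gaussian curvature at psi x of a parametrized surface psi lying in the hyperplane
  nu^perp (a copy of R^3): K = (LN - M^2)/(EG - F^2), with n a unit normal to the surface
  inside nu^perp (the sign of n does not affect K).\<close>
definition gauss_curv_hyp :: "real^4 \<Rightarrow> (real \<times> real \<Rightarrow> real^4) \<Rightarrow> real \<times> real \<Rightarrow> real" where
  "gauss_curv_hyp nu psi x =
     (let pu = pd psi du x; pv = pd psi dv x;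
          n = (SOME n. norm n = 1 \<and> n \<bullet> nu = 0 \<and> n \<bullet> pu = 0 \<and> n \<bullet> pv = 0);
          E = pu \<bullet> pu; F = pu \<bullet> pv; G = pv \<bullet> pv;
          L = pd (pd psi du) du x \<bullet> n; M = pd (pd psi du) dv x \<bullet> n; N = pd (pd psi dv) dv x \<bullet> n
      in (L * N - M^2) / (E * G - F^2))"

end

theory Submission
  imports Defs
begin

lemma bl_proj: "bounded_linear (proj_hyp nu)"
  unfolding proj_hyp_def
  by (rule bounded_linear_sub[OF bounded_linear_ident bounded_linear_scaleR_const[OF bounded_linear_inner_left]])

lemma proj_inner: "n \<bullet> nu = 0 \<Longrightarrow> proj_hyp nu y \<bullet> n = y \<bullet> n"
  by (simp add: proj_hyp_def inner_diff_left inner_diff_right inner_commute)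

lemma pd_proj1:
  assumes "phi differentiable (at x)"
  shows "pd (proj_hyp nu \<circ> phi) d x = proj_hyp nu (pd phi d x)"
proof -
  have "(phi has_derivative frechet_derivative phi (at x)) (at x)"
    using assms frechet_derivative_works by blast
  from bounded_linear.has_derivative[OF bl_proj this]
  have "((proj_hyp nu \<circ> phi) has_derivative (\<lambda>h. proj_hyp nu (frechet_derivative phi (at x) h))) (at x)"
    by (simp add: o_def)
  then show ?thesis unfolding pd_def using frechet_derivative_at by metis
qed

lemma pd_proj2:
  assumes "open U" "x0 \<in> U" "\<forall>x\<in>U. phi differentiable (at x)"
    and "pd phi d1 differentiable (at x0)"
  shows "pd (pd (proj_hyp nu \<circ> phi) d1) d2 x0 = proj_hyp nu (pd (pd phi d1) d2 x0)"
proof -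
  have "(pd phi d1 has_derivative frechet_derivative (pd phi d1) (at x0)) (at x0)"
    using assms frechet_derivative_works by blast
  from bounded_linear.has_derivative[OF bl_proj this]
  have "((\<lambda>x. proj_hyp nu (pd phi d1 x)) has_derivative (\<lambda>h. proj_hyp nu (frechet_derivative (pd phi d1) (at x0) h))) (at x0)"
    by simp
  then have "(pd (proj_hyp nu \<circ> phi) d1 has_derivative (\<lambda>h. proj_hyp nu (frechet_derivative (pd phi d1) (at x0) h))) (at x0)"
    by (rule has_derivative_transform_within_open[OF _ assms(1,2)]) (simp add: pd_proj1 assms(3))
  then show ?thesis unfolding pd_def[of "pd _ _"] using frechet_derivative_at
    by (metis pd_def)
qed

lemma quad_lin_zero:
  fixes p q :: real
  assumes "\<forall>t. 0 \<le> 2*t*p + t^2*q"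
  shows "p = 0"
proof (rule ccontr)
  assume "p \<noteq> 0"
  define K where "K = \<bar>q\<bar> + 1"
  have K: "K > 0" "q < K" unfolding K_def by auto
  define t where "t = - p / K"
  have "0 \<le> 2*t*p + t^2*q" using assms by blast
  hence "0 \<le> K^2 * (2*t*p + t^2*q)" using K by simp
  also have "K^2 * (2*t*p + t^2*q) = p^2 * (q - 2*K)"
    unfolding t_def using K by (simp add: field_simps power2_eq_square)
  also have "\<dots> < 0" using K \<open>p \<noteq> 0\<close>
    by (simp add: mult_pos_neg)
  finally show False by simp
qed

lemma psd_det:
  fixes L M N c a b :: real
  assumes psd: "\<And>w1 w2. 0 \<le> c * (w1^2*L + 2*w1*w2*M + w2^2*N)"
    and z: "a^2*L + 2*a*b*M + b^2*N = 0" and ab: "a \<noteq> 0 \<or> b \<noteq> 0" and c: "c \<noteq> 0"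
  shows "L*N - M^2 = 0"
proof -
  have e1: "c*(a*L + b*M) = 0"
  proof (rule quad_lin_zero[where q = "c*L"], rule allI)
    fix t
    have "0 \<le> c * ((a+t)^2*L + 2*(a+t)*b*M + b^2*N)" by (rule psd)
    also have "c * ((a+t)^2*L + 2*(a+t)*b*M + b^2*N) = c*(a^2*L + 2*a*b*M + b^2*N) + 2*t*(c*(a*L + b*M)) + t^2*(c*L)"
      by (simp add: algebra_simps power2_eq_square)
    finally show "0 \<le> 2*t*(c*(a*L + b*M)) + t^2*(c*L)" using z by simp
  qed
  have e2: "c*(a*M + b*N) = 0"
  proof (rule quad_lin_zero[where q = "c*N"], rule allI)
    fix t
    have "0 \<le> c * (a^2*L + 2*a*(b+t)*M + (b+t)^2*N)" by (rule psd)
    also have "c * (a^2*L + 2*a*(b+t)*M + (b+t)^2*N) = c*(a^2*L + 2*a*b*M + b^2*N) + 2*t*(c*(a*M + b*N)) + t^2*(c*N)"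
      by (simp add: algebra_simps power2_eq_square)
    finally show "0 \<le> 2*t*(c*(a*M + b*N)) + t^2*(c*N)" using z by simp
  qed
  have f1: "a*L + b*M = 0" and f2: "a*M + b*N = 0" using e1 e2 c by auto
  have "(L*N - M^2)*a = N*(a*L + b*M) - M*(a*M + b*N)" by (simp add: algebra_simps power2_eq_square)
  hence g1: "(L*N - M^2)*a = 0" using f1 f2 by simp
  have "(L*N - M^2)*b = L*(a*M + b*N) - M*(a*L + b*M)" by (simp add: algebra_simps power2_eq_square)
  hence g2: "(L*N - M^2)*b = 0" using f1 f2 by simp
  show ?thesis using g1 g2 ab by auto
qed

theorem mainTheorem7:
  fixes phi :: "real \<times> real \<Rightarrow> real^4" and U :: "(real \<times> real) set"
    and x0 :: "real \<times> real" and nu :: "real^4"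
  assumes "regular_C2_param phi U" and "x0 \<in> U"
    and "flat_inflection phi x0"
    and "norm nu = 1" and "\<forall>z\<in>tangent_space phi x0. nu \<bullet> z = 0"
  shows "gauss_curv_hyp nu (proj_hyp nu \<circ> phi) x0 = 0"
proof -
  note R = assms(1)[unfolded regular_C2_param_def]
  define psi where "psi = proj_hyp nu \<circ> phi"
  define pu where "pu = pd phi du x0"
  define pv where "pv = pd phi dv x0"
  define A where "A = pd (pd phi du) du x0"
  define B where "B = pd (pd phi du) dv x0"
  define C where "C = pd (pd phi dv) dv x0"
  have T: "tangent_space phi x0 = span {pu, pv}" unfolding tangent_space_def pu_def pv_def ..
  have nupu: "pu \<bullet> nu = 0" and nupv: "pv \<bullet> nu = 0"
    using assms(5) unfolding T by (auto simp: span_base inner_commute)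
  have dif: "phi differentiable (at x0)" using R assms(2) by blast
  have psu: "pd psi du x0 = pu" unfolding psi_def pu_def
    using pd_proj1[OF dif] nupu unfolding pu_def by (simp add: proj_hyp_def)
  have psv: "pd psi dv x0 = pv" unfolding psi_def pv_def
    using pd_proj1[OF dif] nupv unfolding pv_def by (simp add: proj_hyp_def)
  have d1: "pd phi du differentiable (at x0)" "pd phi dv differentiable (at x0)"
    using R assms(2) by auto
  have psA: "pd (pd psi du) du x0 = proj_hyp nu A"
    unfolding psi_def A_def using pd_proj2[OF _ assms(2) _ d1(1)] R by blast
  have psB: "pd (pd psi du) dv x0 = proj_hyp nu B"
    unfolding psi_def B_def using pd_proj2[OF _ assms(2) _ d1(1)] R by blast
  have psC: "pd (pd psi dv) dv x0 = proj_hyp nu C"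
    unfolding psi_def C_def using pd_proj2[OF _ assms(2) _ d1(2)] R by blast
  have "\<exists>n::real^4. norm n = 1 \<and> n \<bullet> nu = 0 \<and> n \<bullet> pu = 0 \<and> n \<bullet> pv = 0"
  proof -
    have "dim {nu, pu, pv} \<le> card {nu, pu, pv}" by (rule dim_le_card) (auto simp: span_base)
    also have "\<dots> \<le> 3" by (simp add: card_insert_le_m1)
    finally have "dim {nu, pu, pv} < DIM(real^4)" by simp
    then obtain m :: "real^4" where m: "m \<noteq> 0" "\<And>y. y \<in> span {nu, pu, pv} \<Longrightarrow> orthogonal m y"
      using orthogonal_to_subspace_exists by blast
    have "orthogonal m nu" "orthogonal m pu" "orthogonal m pv" using m(2) by (auto simp: span_base)
    then show ?thesis using m(1)
      by (intro exI[of _ "m /\<^sub>R norm m"]) (auto simp: orthogonal_def)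
  qed
  note ex = this
  define n :: "real^4" where "n = (SOME n. norm n = 1 \<and> n \<bullet> nu = 0 \<and> n \<bullet> pu = 0 \<and> n \<bullet> pv = 0)"
  have n: "norm n = 1 \<and> n \<bullet> nu = 0 \<and> n \<bullet> pu = 0 \<and> n \<bullet> pv = 0"
    unfolding n_def by (rule someI_ex[OF ex])
  note ndef = n_def
  have nT: "t \<bullet> n = 0" if "t \<in> span {pu, pv}" for t
  proof -
    have "orthogonal n t"
      using n by (intro orthogonal_to_span[OF that]) (auto simp: orthogonal_def inner_commute)
    thus ?thesis by (simp add: orthogonal_def inner_commute)
  qed
  define L where "L = A \<bullet> n"
  define M where "M = B \<bullet> n"
  define N where "N = C \<bullet> n"
  have hess: "hess_term phi x0 w1 w2 \<bullet> n = w1^2*L + 2*w1*w2*M + w2^2*N" for w1 w2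
    unfolding hess_term_def L_def M_def N_def A_def B_def C_def
    by (simp add: inner_add_left)
  have G: "gauss_curv_hyp nu psi x0 = (L * N - M^2) / (pu \<bullet> pu * (pv \<bullet> pv) - (pu \<bullet> pv)^2)"
    unfolding gauss_curv_hyp_def Let_def psu psv psA psB psC
    using n by (simp add: proj_inner L_def M_def N_def ndef[symmetric])
  define Q where "Q = (\<lambda>w1 w2. w1^2*L + 2*w1*w2*M + w2^2*N)"
  obtain v where v: "curvature_ellipse phi x0 \<subseteq> {s *\<^sub>R v | s. s \<ge> 0}"
    and z0: "0 \<in> curvature_ellipse phi x0"
    using assms(3) unfolding flat_inflection_def by blast
  define c where "c = v \<bullet> n"
  have unitQ: "\<exists>s\<ge>0. Q w1 w2 = s * c" if "norm (w1 *\<^sub>R pu + w2 *\<^sub>R pv) = 1" for w1 w2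
  proof -
    obtain t z where t: "t \<in> span {pu, pv}" and z: "\<And>w. w \<in> span {pu, pv} \<Longrightarrow> orthogonal z w"
      and hz: "hess_term phi x0 w1 w2 = t + z"
      using orthogonal_subspace_decomp_exists by blast
    have "z \<in> curvature_ellipse phi x0"
      unfolding curvature_ellipse_def T
      using that t z hz unfolding pu_def pv_def
      by (intro CollectI exI[of _ w1] exI[of _ w2] exI[of _ t])
         (auto simp: orthogonal_def)
    then obtain s where s: "s \<ge> 0" "z = s *\<^sub>R v" using v by blast
    have "Q w1 w2 = z \<bullet> n" using hess[of w1 w2] hz nT[OF t] by (simp add: Q_def inner_add_left)
    also have "\<dots> = s * c" using s by (simp add: c_def)
    finally show ?thesis using s by blast
  qed
  obtain a b where ab: "norm (a *\<^sub>R pu + b *\<^sub>R pv) = 1" and Qab: "Q a b = 0"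
  proof -
    from z0 obtain a b t where "norm (a *\<^sub>R pu + b *\<^sub>R pv) = 1" "t \<in> span {pu, pv}"
      "0 = hess_term phi x0 a b - t"
      unfolding curvature_ellipse_def T pu_def pv_def by blast
    moreover have "Q a b = hess_term phi x0 a b \<bullet> n" by (simp add: hess Q_def)
    ultimately show ?thesis using that nT by (metis eq_iff_diff_eq_0)
  qed
  have abnz: "a \<noteq> 0 \<or> b \<noteq> 0" using ab by auto
  have indep: "w1 *\<^sub>R pu + w2 *\<^sub>R pv \<noteq> 0" if "w1 \<noteq> 0 \<or> w2 \<noteq> 0" for w1 w2
    using R assms(2) that unfolding pu_def pv_def by blast
  have psd: "0 \<le> c * Q w1 w2" for w1 w2
  proof (cases "w1 = 0 \<and> w2 = 0")
    case True thus ?thesis by (simp add: Q_def)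
  next
    case False
    define r where "r = norm (w1 *\<^sub>R pu + w2 *\<^sub>R pv)"
    have r: "r > 0" using indep False unfolding r_def by auto
    have "norm ((w1/r) *\<^sub>R pu + (w2/r) *\<^sub>R pv) = 1"
    proof -
      have "(w1/r) *\<^sub>R pu + (w2/r) *\<^sub>R pv = (1/r) *\<^sub>R (w1 *\<^sub>R pu + w2 *\<^sub>R pv)"
        by (simp add: scaleR_add_right)
      thus ?thesis using r by (simp add: r_def)
    qed
    then obtain s where s: "s \<ge> 0" "Q (w1/r) (w2/r) = s * c" using unitQ by blast
    have "Q (w1/r) (w2/r) = Q w1 w2 / r^2" using r
      by (simp add: Q_def field_simps power2_eq_square)
    hence "Q w1 w2 = r^2 * s * c" using s r by (simp add: field_simps)
    hence "c * Q w1 w2 = r^2 * s * c^2" by (simp add: power2_eq_square)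
    thus ?thesis using s by simp
  qed
  have "L * N - M^2 = 0"
  proof (cases "c = 0")
    case True
    have all0: "Q w1 w2 = 0" if "w1 \<noteq> 0 \<or> w2 \<noteq> 0" for w1 w2
    proof -
      define r where "r = norm (w1 *\<^sub>R pu + w2 *\<^sub>R pv)"
      have r: "r > 0" using indep that unfolding r_def by auto
      have "(w1/r) *\<^sub>R pu + (w2/r) *\<^sub>R pv = (1/r) *\<^sub>R (w1 *\<^sub>R pu + w2 *\<^sub>R pv)"
        by (simp add: scaleR_add_right)
      hence "norm ((w1/r) *\<^sub>R pu + (w2/r) *\<^sub>R pv) = 1" using r by (simp add: r_def)
      then obtain s where "Q (w1/r) (w2/r) = s * c" using unitQ by blast
      hence "Q (w1/r) (w2/r) = 0" using True by simp
      moreover have "Q (w1/r) (w2/r) = Q w1 w2 / r^2" using r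
        by (simp add: Q_def field_simps power2_eq_square)
      ultimately show ?thesis using r by simp
    qed
    have "L = 0" using all0[of 1 0] by (simp add: Q_def)
    moreover have "N = 0" using all0[of 0 1] by (simp add: Q_def)
    moreover have "M = 0" using all0[of 1 1] \<open>L = 0\<close> \<open>N = 0\<close> by (simp add: Q_def)
    ultimately show ?thesis by simp
  next
    case False
    show ?thesis
      by (rule psd_det[OF _ _ abnz False]) (use psd Qab in \<open>simp_all add: Q_def\<close>)
  qed
  thus ?thesis using G unfolding psi_def by simp
qed

end
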